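(* Let $\Omega\subset\mathbb{C}^n$ be a bounded domain, and let $\Psi,\Psi'$ be elementary local indicators on $\mathbb{D}^n$ such that $\Psi\le\Psi'+C$ for some constant $C$, and $\tau':=\tau_{\Psi'}>0$. Let $A\subset\mathbb{D}$, $a\in\Omega$ and $\varphi\in Hol(\mathbb{D},\Omega)$ satisfy $\sum_{\alpha\in A}m_{\varphi,a,\Psi'}(\alpha)\le\tau'$. Then $\sum_{\alpha\in A}m_{\varphi,a,\Psi}(\alpha)\le\tau:=\tau_\Psi$.
   Context: $\mathbb{D}$ is the unit disk; $z\cdot\bar w=\sum_jz_j\bar w_j$. An elementary local indicator is $\Psi(z)=\max_{1\le j\le n}m_j\log|z\cdot\bar v_j|$ on $\mathbb{D}^n$, with $\{v_j\}$ a basis of $\mathbb{C}^n$ and $m_j\in\mathbb{R}_+$; its Monge–Ampère mass at $0$ is $\tau_\Psi=m_1\cdots m_n$. Multiplicity: if $\varphi(\alpha)=a$, $m_{\varphi,a,\Psi}(\alpha)=\min\big(\tau_\Psi,\liminf_{\zeta\to0}\Psi(\varphi(\alpha+\zeta)-a)/\log|\zeta|\big)$; otherwise $m_{\varphi,a,\Psi}(\alpha)=0$. *)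

theory Defs
  imports "HOL-Analysis.Analysis" "HOL-Library.Extended_Real"
begin

definition logabs :: "complex \<Rightarrow> ereal" where
  "logabs w = (if w = 0 then -\<infinity> else ereal (ln (cmod w)))"

definition hdot :: "complex^'n \<Rightarrow> complex^'n \<Rightarrow> complex" where
  "hdot z w = (\<Sum>j\<in>UNIV. z $ j * cnj (w $ j))"

definition polydisc :: "(complex^'n) set" where
  "polydisc = {z. \<forall>i. cmod (z $ i) < 1}"

text \<open>Data of an elementary local indicator: v is a (complex) basis of C^n indexed by the
  n coordinates, and the weights m_j are positive reals.\<close>
definition eli_data :: "('n \<Rightarrow> complex^'n) \<Rightarrow> ('n \<Rightarrow> real) \<Rightarrow> bool" where
  "eli_data v m \<longleftrightarrow>
     (\<forall>c::'n \<Rightarrow> complex. (\<Sum>j\<in>UNIV. c j *s v j) = 0 \<longrightarrow> (\<forall>j. c j = 0)) \<and>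
     (\<forall>j. m j > 0)"

definition eli :: "('n::finite \<Rightarrow> complex^'n) \<Rightarrow> ('n \<Rightarrow> real) \<Rightarrow> complex^'n \<Rightarrow> ereal" where
  "eli v m z = Max ((\<lambda>j. ereal (m j) * logabs (hdot z (v j))) ` UNIV)"

text \<open>Monge--Ampere mass at 0: tau = m_1 ... m_n.\<close>
definition eli_tau :: "('n::finite \<Rightarrow> real) \<Rightarrow> real" where
  "eli_tau m = (\<Prod>j\<in>UNIV. m j)"

definition mult :: "(complex \<Rightarrow> complex^'n) \<Rightarrow> complex^'n \<Rightarrow> ('n::finite \<Rightarrow> complex^'n)
    \<Rightarrow> ('n \<Rightarrow> real) \<Rightarrow> complex \<Rightarrow> ereal" where
  "mult \<phi> a v m \<alpha> =
     (if \<phi> \<alpha> = a then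
        min (ereal (eli_tau m))
            (Liminf (at 0) (\<lambda>\<zeta>. eli v m (\<phi> (\<alpha> + \<zeta>) - a) / ereal (ln (cmod \<zeta>))))
      else 0)"

end

theory Submission
  imports Defs
begin


definition hmat :: "('n::finite \<Rightarrow> complex^'n) \<Rightarrow> complex^'n^'n" where
  "hmat v = (\<chi> j k. cnj (v j $ k))"

lemma hdot_hmat: "hdot z (v j) = (hmat v *v z) $ j"
  by (simp add: hdot_def hmat_def matrix_vector_mult_def mult.commute)

lemma ker_invertible:
  fixes A :: "'a::field^'n^'n"
  shows "invertible A \<longleftrightarrow> (\<forall>x. A *v x = 0 \<longrightarrow> x = 0)"
  by (simp add: invertible_left_inverse matrix_left_invertible_ker)

lemma hmat_invertible:
  fixes v :: "'n::finite \<Rightarrow> complex^'n"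
  assumes "eli_data v m"
  shows "invertible (hmat v)"
proof -
  define V :: "complex^'n^'n" where "V = (\<chi> k j. v j $ k)"
  have "V *v c = 0 \<Longrightarrow> c = 0" for c
  proof -
    assume h: "V *v c = 0"
    have "(\<Sum>j\<in>UNIV. (c $ j) *s v j) = V *v c"
      by (simp add: vec_eq_iff V_def matrix_vector_mult_def sum_component mult.commute)
    with h assms have "\<forall>j. c $ j = 0" unfolding eli_data_def by metis
    then show "c = 0" by (simp add: vec_eq_iff)
  qed
  then have "invertible V" by (simp add: ker_invertible)
  then have iT: "invertible (transpose V)" by (simp add: invertible_det_nz det_transpose)
  have "hmat v *v z = 0 \<Longrightarrow> z = 0" for z
  proof -
    assume h: "hmat v *v z = 0"
    define y where "y = (\<chi> k. cnj (z $ k))"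
    have "(transpose V *v y) $ j = cnj ((hmat v *v z) $ j)" for j
      by (simp add: V_def y_def transpose_def hmat_def matrix_vector_mult_def mult.commute)
    with h have "transpose V *v y = 0" by (simp add: vec_eq_iff)
    with iT have "y = 0" by (simp add: ker_invertible)
    then show "z = 0" by (simp add: vec_eq_iff y_def)
  qed
  then show ?thesis by (simp add: ker_invertible)
qed



lemma mv_smult: "(A::complex^'n^'m) *v (c *s x) = c *s (A *v x)"
  by (simp add: vec_eq_iff matrix_vector_mult_def sum_distrib_left mult.left_commute)

lemma mv_axis: "((A::complex^'n^'m) *v axis j 1) $ i = A $ i $ j"
  by (simp add: matrix_vector_mult_def axis_def vec_lambda_beta if_distrib sum.delta cong: if_cong)

lemma eli_le0:
  fixes v :: "'n::finite \<Rightarrow> complex^'n"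
  assumes "eli_data v m" "\<forall>i. cmod (hdot z (v i)) \<le> 1"
  shows "eli v m z \<le> 0"
  unfolding eli_def
proof (subst Max_le_iff, simp, simp, safe)
  fix i
  have "m i > 0" using assms(1) by (simp add: eli_data_def)
  moreover have "logabs (hdot z (v i)) \<le> 0"
    using assms(2)[rule_format, of i] by (auto simp: logabs_def)
  ultimately show "ereal (m i) * logabs (hdot z (v i)) \<le> 0"
    by (simp add: ereal_mult_le_0_iff)
qed

lemma edge:
  fixes v v' :: "'n::finite \<Rightarrow> complex^'n"
  assumes ed: "eli_data v m" and ed': "eli_data v' m'"
    and hyp: "\<forall>z\<in>polydisc. eli v m z \<le> eli v' m' z + ereal C"
    and Q1: "hmat v' ** Q = mat 1"
    and Bne: "(hmat v ** Q) $ i $ j \<noteq> 0"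
  shows "m' j \<le> m i"
proof (rule ccontr)
  assume "\<not> m' j \<le> m i"
  then have dpos: "m' j - m i > 0" by simp
  have mpos: "m i > 0" "\<And>l. m' l > 0" using ed ed' by (auto simp: eli_data_def)
  define c where "c = Q *v axis j 1"
  define b where "b = cmod ((hmat v ** Q) $ i $ j)"
  have bpos: "b > 0" using Bne by (simp add: b_def)
  define t0 where "t0 = 1 / (norm c + 1)"
  have ncpos: "norm c + 1 > 0" using norm_ge_zero[of c] by (simp add: add_nonneg_pos)
  have t0pos: "t0 > 0" using ncpos unfolding t0_def by simp
  have key: "m i * (ln t + ln b) \<le> m' j * ln t + C" if t: "0 < t" "t < t0" for t
  proof -
    define z where "z = complex_of_real t *s c"
    have zpd: "z \<in> polydisc"
      unfolding polydisc_def
    proof safe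
      fix k
      have nth_le_c: "cmod (c $ k) \<le> norm c" by (rule Finite_Cartesian_Product.norm_nth_le)
      have "cmod (z $ k) = t * cmod (c $ k)" using t by (simp add: z_def norm_mult)
      also have "\<dots> \<le> t * norm c" using t nth_le_c by (simp add: mult_left_mono)
      also have "\<dots> < t0 * (norm c + 1)"
        using t by (intro mult_strict_mono) auto
      also have "\<dots> = 1" using ncpos by (simp add: t0_def)
      finally show "cmod (z $ k) < 1" .
    qed
    have u: "hdot z (v' l) = (if l = j then complex_of_real t else 0)" for l
      by (simp add: hdot_hmat z_def c_def mv_smult matrix_vector_mul_assoc Q1 axis_def)
    have g: "hdot z (v i) = complex_of_real t * (hmat v ** Q) $ i $ j"
      by (simp add: hdot_hmat z_def c_def mv_smult matrix_vector_mul_assoc mv_axis)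
    have e': "eli v' m' z = ereal (m' j * ln t)"
      unfolding eli_def
    proof (rule Max_eqI)
      show "finite (range (\<lambda>l. ereal (m' l) * logabs (hdot z (v' l))))" by simp
    next
      fix y assume "y \<in> range (\<lambda>l. ereal (m' l) * logabs (hdot z (v' l)))"
      then obtain l where "y = ereal (m' l) * logabs (hdot z (v' l))" by auto
      then show "y \<le> ereal (m' j * ln t)"
        using t mpos(2)[of l] by (cases "l = j") (auto simp: u logabs_def)
    next
      show "ereal (m' j * ln t) \<in> range (\<lambda>l. ereal (m' l) * logabs (hdot z (v' l)))"
        using t by (auto simp: u logabs_def intro!: image_eqI[where x=j])
    qed
    have "ereal (m i) * logabs (hdot z (v i)) \<le> eli v m z"
      unfolding eli_def by (rule Max_ge) auto
    also have "\<dots> \<le> eli v' m' z + ereal C" using hyp zpd by blast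
    finally have "ereal (m i * ln (t * b)) \<le> ereal (m' j * ln t + C)"
      using t bpos by (simp add: g e' logabs_def b_def norm_mult)
    then show ?thesis using t bpos by (simp add: ln_mult)
  qed
  define X where "X = max (1 - ln t0) ((C - m i * ln b) / (m' j - m i) + 1)"
  have "exp (- X) < t0"
  proof -
    have "- X < ln t0" by (simp add: X_def)
    then have "exp (- X) < exp (ln t0)" by simp
    then show ?thesis using t0pos by simp
  qed
  from key[OF exp_gt_zero this] have "(m' j - m i) * X \<le> C - m i * ln b"
    by (simp add: algebra_simps)
  then have "X \<le> (C - m i * ln b) / (m' j - m i)"
    using dpos by (simp add: field_simps)
  then show False by (simp add: X_def)
qed



lemma perm_ratio:
  fixes m m' :: "'n::finite \<Rightarrow> real"
  assumes p: "p permutes (UNIV::'n set)" and mpos: "\<And>l. m l > 0" and m'pos: "\<And>l. m' l > 0"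
    and le: "\<And>l. p l \<noteq> j \<Longrightarrow> m' (p l) \<le> m l" and pij: "p i = j"
  shows "m i * eli_tau m' \<le> m' j * eli_tau m"
proof -
  have "eli_tau m' = (\<Prod>l\<in>UNIV. m' (p l))"
    unfolding eli_tau_def using prod.permute[OF p, of m'] by (simp add: o_def)
  also have "\<dots> = m' (p i) * (\<Prod>l\<in>UNIV-{i}. m' (p l))"
    by (simp add: prod.remove[of UNIV i])
  finally have t': "eli_tau m' = m' j * (\<Prod>l\<in>UNIV-{i}. m' (p l))" by (simp add: pij)
  have t: "eli_tau m = m i * (\<Prod>l\<in>UNIV-{i}. m l)"
    unfolding eli_tau_def by (simp add: prod.remove[of UNIV i])
  have "(\<Prod>l\<in>UNIV-{i}. m' (p l)) \<le> (\<Prod>l\<in>UNIV-{i}. m l)"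
  proof (rule prod_mono)
    fix l assume "l \<in> UNIV - {i}"
    then have "p l \<noteq> j" using pij permutes_inj[OF p] by (auto dest: injD)
    then show "0 \<le> m' (p l) \<and> m' (p l) \<le> m l" using le m'pos[of "p l"] by auto
  qed
  then have "m i * m' j * (\<Prod>l\<in>UNIV-{i}. m' (p l)) \<le> m i * m' j * (\<Prod>l\<in>UNIV-{i}. m l)"
    using mpos[of i] m'pos[of j] by (intro mult_left_mono) auto
  then show ?thesis by (simp add: t t' mult_ac)
qed



lemma prod_if_split:
  fixes b :: "'n::finite \<Rightarrow> real"
  assumes "p permutes (UNIV::'n set)" "p i = j"
  shows "(\<Prod>l\<in>UNIV. if p l = j then E else b l) = E * (\<Prod>l\<in>UNIV. if p l = j then 1 else b l)"
proof -
  have pe: "p l = j \<longleftrightarrow> l = i" for l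
    using assms permutes_inj[OF assms(1)] by (auto dest: injD)
  have "(\<Prod>l\<in>UNIV. if p l = j then E else b l) =
        (\<Prod>l\<in>UNIV. (if l = i then E else 1) * (if p l = j then 1 else b l))"
    by (rule prod.cong) (auto simp: pe)
  also have "\<dots> = (\<Prod>l\<in>UNIV. (if l = i then E else 1)) * (\<Prod>l\<in>UNIV. if p l = j then 1 else b l)"
    by (rule prod.distrib)
  also have "(\<Prod>l\<in>UNIV. (if l = i then E else 1)) = E" by simp
  finally show ?thesis .
qed

lemma lower_bound:
  fixes v v' :: "'n::finite \<Rightarrow> complex^'n"
  assumes ed: "eli_data v m" and ed': "eli_data v' m'"
    and hyp: "\<forall>z\<in>polydisc. eli v m z \<le> eli v' m' z + ereal C"
  shows "\<exists>c\<ge>0. \<forall>z. (\<forall>i. cmod (hdot z (v i)) \<le> 1) \<longrightarrow> (\<forall>j. hdot z (v' j) \<noteq> 0 \<longrightarrow>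
     ereal (eli_tau m / eli_tau m' * m' j * ln (cmod (hdot z (v' j)))) \<le> eli v m z + ereal c)"
proof -
  have mpos: "\<And>l. m l > 0" and m'pos: "\<And>l. m' l > 0" using ed ed' by (auto simp: eli_data_def)
  have taupos: "eli_tau m > 0" "eli_tau m' > 0"
    unfolding eli_tau_def using mpos m'pos by (auto intro: prod_pos)
  define R where "R = eli_tau m / eli_tau m'"
  have Rpos: "R > 0" using taupos by (simp add: R_def)
  obtain Q where Q1: "hmat v' ** Q = mat 1" and Q2: "Q ** hmat v' = mat 1"
    using hmat_invertible[OF ed'] unfolding invertible_def by blast
  have iQ: "invertible Q" unfolding invertible_def using Q1 Q2 by blast
  define B where "B = hmat v ** Q"
  have dB: "det B \<noteq> 0"
    using invertible_mult[OF hmat_invertible[OF ed] iQ] by (simp add: B_def invertible_det_nz)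
  have gBu: "hmat v *v z = B *v (hmat v' *v z)" for z
    by (simp add: B_def matrix_vector_mul_assoc Q2 flip: matrix_mul_assoc)
  define K where "K j = (\<Sum>p\<in>{p. p permutes (UNIV::'n set)}.
        \<Prod>l\<in>UNIV. if p l = j then 1 else cmod (B $ l $ p l)) / cmod (det B)" for j
  define c where "c = (\<Sum>j\<in>UNIV. \<bar>R * m' j * ln (K j)\<bar>)"
  have c0: "c \<ge> 0" by (simp add: c_def sum_nonneg)
  have edgeB: "m' j' \<le> m i'" if "B $ i' $ j' \<noteq> 0" for i' j'
    using edge[OF ed ed' hyp Q1] that by (simp add: B_def)
  have main: "ereal (R * m' j * ln (cmod (hdot z (v' j)))) \<le> eli v m z + ereal c"
    if gz: "\<forall>i. cmod (hdot z (v i)) \<le> 1" and uz: "hdot z (v' j) \<noteq> 0" for z j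
  proof -
    define g where "g = hmat v *v z"
    define u where "u = hmat v' *v z"
    have gi: "hdot z (v i) = g $ i" for i by (simp add: g_def hdot_hmat)
    have uj: "hdot z (v' j) = u $ j" by (simp add: u_def hdot_hmat)
    have Bu: "B *v u = g" by (simp add: g_def u_def gBu)
    have hle: "eli v m z \<le> 0" by (rule eli_le0[OF ed gz])
    have hge: "ereal (m i) * logabs (g $ i) \<le> eli v m z" for i
      unfolding eli_def gi[symmetric] by (rule Max_ge) auto
    show ?thesis
    proof (cases "eli v m z")
      case MInf
      have "g $ i = 0" for i
      proof (rule ccontr)
        assume "g $ i \<noteq> 0"
        then show False using hge[of i] MInf by (simp add: logabs_def)
      qed
      then have "g = 0" by (simp add: vec_eq_iff)
      then have "z = 0" using hmat_invertible[OF ed] by (simp add: ker_invertible g_def)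
      then show ?thesis using uz by (simp add: hdot_def)
    next
      case PInf
      then show ?thesis using hle by simp
    next
      case (real hr)
      have hr0: "hr \<le> 0" using hle real by simp
      define E where "E = exp (hr / (R * m' j))"
      have E0: "E > 0" by (simp add: E_def)
      have claim1: "cmod (g $ i) \<le> E"
        if p: "p permutes (UNIV::'n set)" "p i = j" "\<forall>l. p l \<noteq> j \<longrightarrow> B $ l $ p l \<noteq> 0" for p i
      proof (cases "g $ i = 0")
        case True then show ?thesis using E0 by simp
      next
        case False
        have "m i * eli_tau m' \<le> m' j * eli_tau m"
          by (rule perm_ratio[OF p(1) mpos m'pos _ p(2)]) (use p(3) edgeB in blast)
        then have miR: "m i \<le> R * m' j"
          using taupos by (simp add: R_def field_simps)
        have "ereal (m i * ln (cmod (g $ i))) \<le> ereal hr"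
          using hge[of i] real False by (simp add: logabs_def)
        then have "m i * ln (cmod (g $ i)) \<le> hr" by simp
        then have l1: "ln (cmod (g $ i)) \<le> hr / m i" using mpos[of i] by (simp add: field_simps)
        have "hr / m i \<le> hr / (R * m' j)"
          using hr0 miR mpos[of i] by (simp add: divide_left_mono_neg)
        with l1 have "ln (cmod (g $ i)) \<le> hr / (R * m' j)" by simp
        then have "exp (ln (cmod (g $ i))) \<le> E" unfolding E_def by simp
        then show ?thesis using False by simp
      qed
      define M where "M = (\<chi> l k. if k = j then g $ l else B $ l $ k)"
      have ujM: "u $ j = det M / det B"
        using cramer[OF dB, of u g] Bu by (simp add: M_def)
      have termb: "cmod (\<Prod>l\<in>UNIV. M $ l $ p l) \<le> E * (\<Prod>l\<in>UNIV. if p l = j then 1 else cmod (B $ l $ p l))"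
        if p: "p permutes (UNIV::'n set)" for p
      proof (cases "\<exists>l. p l \<noteq> j \<and> B $ l $ p l = 0")
        case True
        then obtain l where "p l \<noteq> j" "B $ l $ p l = 0" by blast
        then have z: "(\<Prod>l\<in>UNIV. M $ l $ p l) = 0"
          by (intro prod_zero) (auto simp: M_def intro!: bexI[where x=l])
        have "0 \<le> E * (\<Prod>l\<in>UNIV. if p l = j then 1 else cmod (B $ l $ p l))"
          using E0 by (intro mult_nonneg_nonneg prod_nonneg) auto
        then show ?thesis by (simp only: z norm_zero)
      next
        case False
        define i where "i = inv p j"
        have pi: "p i = j" by (simp add: i_def permutes_inverses[OF p])
        have gi: "cmod (g $ i) \<le> E" using claim1[OF p pi] False by blast
        have "cmod (\<Prod>l\<in>UNIV. M $ l $ p l) = (\<Prod>l\<in>UNIV. cmod (M $ l $ p l))"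
          by (simp add: prod_norm)
        also have "\<dots> \<le> (\<Prod>l\<in>UNIV. if p l = j then E else cmod (B $ l $ p l))"
        proof (rule prod_mono)
          fix l
          show "0 \<le> cmod (M $ l $ p l) \<and> cmod (M $ l $ p l) \<le> (if p l = j then E else cmod (B $ l $ p l))"
          proof (cases "p l = j")
            case True
            then have "l = i" using pi permutes_inj[OF p] by (auto dest: injD)
            then show ?thesis using True gi by (simp add: M_def)
          qed (simp add: M_def)
        qed
        also have "\<dots> = E * (\<Prod>l\<in>UNIV. if p l = j then 1 else cmod (B $ l $ p l))"
          by (rule prod_if_split[OF p pi])
        finally show ?thesis .
      qed
      have "cmod (det M) \<le> (\<Sum>p\<in>{p. p permutes (UNIV::'n set)}. cmod (of_int (sign p) * (\<Prod>l\<in>UNIV. M $ l $ p l)))"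
        unfolding det_def by (rule norm_sum)
      also have "\<dots> \<le> (\<Sum>p\<in>{p. p permutes (UNIV::'n set)}. E * (\<Prod>l\<in>UNIV. if p l = j then 1 else cmod (B $ l $ p l)))"
      proof (rule sum_mono)
        fix p assume "p \<in> {p. p permutes (UNIV::'n set)}"
        then have p: "p permutes (UNIV::'n set)" by simp
        have "cmod (of_int (sign p) :: complex) = 1" by (simp add: sign_def)
        then show "cmod (of_int (sign p) * (\<Prod>l\<in>UNIV. M $ l $ p l)) \<le> E * (\<Prod>l\<in>UNIV. if p l = j then 1 else cmod (B $ l $ p l))"
          using termb[OF p] by (simp add: norm_mult)
      qed
      also have "\<dots> = E * (K j * cmod (det B))"
        using dB by (simp add: K_def sum_distrib_left)
      finally have "cmod (u $ j) \<le> E * K j"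
        using dB by (simp add: ujM norm_divide field_simps)
      moreover have uj0: "cmod (u $ j) > 0" using uz uj by simp
      ultimately have Kpos: "K j > 0" using E0 by (metis mult_pos_pos mult_le_0_iff not_less order.trans less_eq_real_def zero_less_mult_pos)
      have "ln (cmod (u $ j)) \<le> ln (E * K j)"
        using uj0 Kpos E0 \<open>cmod (u $ j) \<le> E * K j\<close> by simp
      also have "\<dots> = hr / (R * m' j) + ln (K j)" using E0 Kpos by (simp add: ln_mult E_def)
      finally have "R * m' j * ln (cmod (u $ j)) \<le> R * m' j * (hr / (R * m' j) + ln (K j))"
        using Rpos m'pos[of j] by (intro mult_left_mono) auto
      also have "\<dots> = hr + R * m' j * ln (K j)"
        using Rpos m'pos[of j] by (simp add: field_simps)
      also have "\<dots> \<le> hr + c"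
      proof -
        have "R * m' j * ln (K j) \<le> \<bar>R * m' j * ln (K j)\<bar>" by simp
        also have "\<dots> \<le> c" unfolding c_def
          by (rule member_le_sum) auto
        finally show ?thesis by simp
      qed
      finally show ?thesis using real uj by simp
    qed
  qed
  show ?thesis using c0 main unfolding R_def by blast
qed



lemma ediv_neg_le:
  fixes x :: ereal assumes "l < 0"
  shows "(x / ereal l \<le> ereal s) \<longleftrightarrow> ereal (s*l) \<le> x"
  using assms by (cases x) (auto simp: divide_le_eq)

lemma ediv_neg_nonneg:
  fixes x :: ereal assumes "l < 0" "x \<le> 0"
  shows "0 \<le> x / ereal l"
  using assms by (cases x) (auto simp: divide_le_eq zero_le_divide_iff)

lemma hdot_tendsto:
  fixes w :: "'b \<Rightarrow> complex^'n::finite"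
  assumes "(w \<longlongrightarrow> 0) F"
  shows "((\<lambda>x. hdot (w x) y) \<longlongrightarrow> 0) F"
proof -
  have "((\<lambda>x. \<Sum>j\<in>UNIV. w x $ j * cnj (y $ j)) \<longlongrightarrow> (\<Sum>j\<in>UNIV. (0::complex^'n) $ j * cnj (y $ j))) F"
    by (intro tendsto_intros assms)
  then show ?thesis by (simp add: hdot_def)
qed

lemma ev_small:
  fixes w :: "'b \<Rightarrow> complex^'n::finite" and v :: "'i::finite \<Rightarrow> complex^'n"
  assumes "(w \<longlongrightarrow> 0) F"
  shows "eventually (\<lambda>x. \<forall>i. cmod (hdot (w x) (v i)) \<le> 1) F"
proof (rule eventually_all_finite)
  fix i
  have "eventually (\<lambda>x. dist (hdot (w x) (v i)) 0 < 1) F"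
    by (rule tendstoD[OF hdot_tendsto[OF assms]]) simp
  then show "eventually (\<lambda>x. cmod (hdot (w x) (v i)) \<le> 1) F"
    by eventually_elim simp
qed

lemma ev_at0_small:
  assumes "r > 0"
  shows "eventually (\<lambda>\<zeta>::complex. \<zeta> \<noteq> 0 \<and> cmod \<zeta> < r) (at 0)"
  unfolding eventually_at using assms by (auto intro!: exI[where x=r])

lemma liminf_nonneg:
  fixes v :: "'n::finite \<Rightarrow> complex^'n" and w :: "complex \<Rightarrow> complex^'n"
  assumes ed: "eli_data v m" and w: "(w \<longlongrightarrow> 0) (at 0)"
  shows "0 \<le> Liminf (at 0) (\<lambda>\<zeta>. eli v m (w \<zeta>) / ereal (ln (cmod \<zeta>)))"
proof (rule Liminf_bounded)
  show "eventually (\<lambda>\<zeta>. 0 \<le> eli v m (w \<zeta>) / ereal (ln (cmod \<zeta>))) (at 0)"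
    using ev_small[OF w, of v] ev_at0_small[OF zero_less_one]
  proof eventually_elim
    case (elim \<zeta>)
    then have "ln (cmod \<zeta>) < 0" by simp
    then show ?case using eli_le0[OF ed] elim by (intro ediv_neg_nonneg) auto
  qed
qed

lemma compare:
  fixes v v' :: "'n::finite \<Rightarrow> complex^'n" and w :: "complex \<Rightarrow> complex^'n"
  assumes ed: "eli_data v m" and ed': "eli_data v' m'" and w: "(w \<longlongrightarrow> 0) (at 0)"
    and c0: "c \<ge> 0"
    and lb: "\<forall>z. (\<forall>i. cmod (hdot z (v i)) \<le> 1) \<longrightarrow> (\<forall>j. hdot z (v' j) \<noteq> 0 \<longrightarrow>
       ereal (R * m' j * ln (cmod (hdot z (v' j)))) \<le> eli v m z + ereal c)"
    and Rpos: "R > 0" and tau: "R * eli_tau m' = eli_tau m"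
  shows "min (ereal (eli_tau m)) (Liminf (at 0) (\<lambda>\<zeta>. eli v m (w \<zeta>) / ereal (ln (cmod \<zeta>))))
     \<le> ereal R * min (ereal (eli_tau m')) (Liminf (at 0) (\<lambda>\<zeta>. eli v' m' (w \<zeta>) / ereal (ln (cmod \<zeta>))))"
    (is "min _ ?L \<le> _ * min _ ?L'")
proof -
  define f where "f = (\<lambda>\<zeta>. eli v m (w \<zeta>) / ereal (ln (cmod \<zeta>)))"
  define g where "g = (\<lambda>\<zeta>. eli v' m' (w \<zeta>) / ereal (ln (cmod \<zeta>)))"
  have m'pos: "\<And>l. m' l > 0" using ed' by (auto simp: eli_data_def)
  have L'0: "0 \<le> ?L'" by (rule liminf_nonneg[OF ed' w])
  show ?thesis
  proof (cases "ereal (eli_tau m') \<le> ?L'")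
    case True
    then have "ereal R * min (ereal (eli_tau m')) ?L' = ereal (eli_tau m)"
      using tau by (simp add: min_def)
    then show ?thesis by simp
  next
    case False
    then obtain l' where l': "?L' = ereal l'" "l' < eli_tau m'" "0 \<le> l'"
      using L'0 by (cases ?L') auto
    have "?L \<le> ereal (R * l')"
    proof (rule ccontr)
      assume "\<not> ?L \<le> ereal (R * l')"
      then have "ereal (R * l') < ?L" by simp
      then obtain s where s: "R * l' < s" "ereal s < ?L" using ereal_dense2 by force
      define q where "q = s / R"
      have Rq: "R * q = s" using Rpos by (simp add: q_def)
      define s1 where "s1 = (l' + q) / 2"
      define \<epsilon> where "\<epsilon> = s - R * s1"
      have "l' < q" using s Rpos by (simp add: q_def field_simps)
      then have s1: "l' < s1" "s1 < q" unfolding s1_def by auto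
      have "R * s1 < R * q" using s1 Rpos by simp
      then have \<epsilon>0: "\<epsilon> > 0" using Rq by (simp add: \<epsilon>_def)
      have ev1: "eventually (\<lambda>\<zeta>. ereal s < f \<zeta>) (at 0)"
        using s(2) le_Liminf_iff[of ?L "at 0" f] unfolding f_def by auto
      have "\<not> eventually (\<lambda>\<zeta>. ereal s1 < g \<zeta>) (at 0)"
      proof
        assume "eventually (\<lambda>\<zeta>. ereal s1 < g \<zeta>) (at 0)"
        then have "eventually (\<lambda>\<zeta>. ereal s1 \<le> g \<zeta>) (at 0)" by eventually_elim simp
        then have "ereal s1 \<le> ?L'" unfolding g_def by (rule Liminf_bounded)
        then show False using l' s1 by simp
      qed
      then have fr: "frequently (\<lambda>\<zeta>. g \<zeta> \<le> ereal s1) (at 0)"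
        by (simp add: not_eventually not_less)
      have ev2: "eventually (\<lambda>\<zeta>. ereal s < f \<zeta> \<and> (\<zeta> \<noteq> 0 \<and> cmod \<zeta> < min 1 (exp (- c / \<epsilon>)))
                 \<and> (\<forall>i. cmod (hdot (w \<zeta>) (v i)) \<le> 1)) (at 0)"
        using ev1 ev_at0_small[of "min 1 (exp (- c / \<epsilon>))", simplified] ev_small[OF w, of v]
        by eventually_elim auto
      obtain \<zeta> where \<zeta>: "g \<zeta> \<le> ereal s1" "ereal s < f \<zeta>" "\<zeta> \<noteq> 0"
          "cmod \<zeta> < 1" "cmod \<zeta> < exp (- c / \<epsilon>)" "\<forall>i. cmod (hdot (w \<zeta>) (v i)) \<le> 1"
        using frequently_ex[OF frequently_eventually_frequently[OF fr ev2]] by auto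
      define ll where "ll = ln (cmod \<zeta>)"
      have ll0: "ll < 0" using \<zeta> by (simp add: ll_def)
      have llc: "ll < - c / \<epsilon>"
      proof -
        have "ln (cmod \<zeta>) < ln (exp (- c / \<epsilon>))" using \<zeta> by (intro ln_less_cancel_iff[THEN iffD2]) auto
        then show ?thesis by (simp add: ll_def)
      qed
      have "ereal (s1 * ll) \<le> eli v' m' (w \<zeta>)"
        using \<zeta>(1) ediv_neg_le[OF ll0] by (simp add: g_def ll_def)
      then obtain j where j: "ereal (s1 * ll) \<le> ereal (m' j) * logabs (hdot (w \<zeta>) (v' j))"
        unfolding eli_def by (subst (asm) Max_ge_iff) auto
      have uj: "hdot (w \<zeta>) (v' j) \<noteq> 0"
      proof
        assume "hdot (w \<zeta>) (v' j) = 0"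
        then show False using j m'pos[of j] by (simp add: logabs_def)
      qed
      with j have "s1 * ll \<le> m' j * ln (cmod (hdot (w \<zeta>) (v' j)))" by (simp add: logabs_def)
      then have "R * (s1 * ll) \<le> R * (m' j * ln (cmod (hdot (w \<zeta>) (v' j))))"
        using Rpos by (intro mult_left_mono) auto
      moreover have "ereal (R * m' j * ln (cmod (hdot (w \<zeta>) (v' j)))) \<le> eli v m (w \<zeta>) + ereal c"
        using lb \<zeta>(6) uj by blast
      ultimately have "ereal (R * s1 * ll) \<le> eli v m (w \<zeta>) + ereal c"
        by (smt (verit, best) ereal_less_eq(3) mult.assoc order_trans)
      moreover have eq: "(R * s1 - c / ll) * ll = R * s1 * ll - c" using ll0 by (simp add: field_simps)
      ultimately have hb: "ereal ((R * s1 - c / ll) * ll) \<le> eli v m (w \<zeta>)"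
        by (cases "eli v m (w \<zeta>)") auto
      have "f \<zeta> \<le> ereal (R * s1 - c / ll)"
        unfolding f_def ll_def[symmetric] using ediv_neg_le[OF ll0] hb by simp
      moreover have "R * s1 - c / ll < s"
      proof -
        have "- c / \<epsilon> * \<epsilon> > ll * \<epsilon>" using llc \<epsilon>0 by (intro mult_strict_right_mono) auto
        then have "- c > ll * \<epsilon>" using \<epsilon>0 by simp
        then have "- c / ll < \<epsilon>" using ll0 by (simp add: field_simps)
        then show ?thesis by (simp add: \<epsilon>_def)
      qed
      ultimately have "f \<zeta> < ereal s" by (meson ereal_less_eq(3) le_less_trans less_ereal.simps(1))
      then show False using \<zeta>(2) by simp
    qed
    then have "min (ereal (eli_tau m)) ?L \<le> ereal (R * l')" by (simp add: min.coboundedI2)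
    also have "\<dots> = ereal R * min (ereal (eli_tau m')) ?L'" using l' by (simp add: min_def)
    finally show ?thesis .
  qed
qed



lemma phi_tendsto:
  fixes \<phi> :: "complex \<Rightarrow> complex^'n::finite"
  assumes hol: "\<forall>i. (\<lambda>z. \<phi> z $ i) holomorphic_on ball 0 1" and \<alpha>: "\<alpha> \<in> ball 0 1"
  shows "((\<lambda>\<zeta>. \<phi> (\<alpha> + \<zeta>) - \<phi> \<alpha>) \<longlongrightarrow> 0) (at 0)"
proof -
  have "((\<lambda>z. \<phi> z $ i) \<longlongrightarrow> \<phi> \<alpha> $ i) (at \<alpha>)" for i
  proof -
    have "continuous_on (ball 0 1) (\<lambda>z. \<phi> z $ i)"
      using hol by (simp add: holomorphic_on_imp_continuous_on)
    then have "isCont (\<lambda>z. \<phi> z $ i) \<alpha>"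
      using \<alpha> by (simp add: continuous_on_eq_continuous_at)
    then show ?thesis by (simp add: isCont_def)
  qed
  then have "((\<lambda>z. \<chi> i. \<phi> z $ i) \<longlongrightarrow> (\<chi> i. \<phi> \<alpha> $ i)) (at \<alpha>)"
    by (rule tendsto_vec_lambda)
  then have "(\<phi> \<longlongrightarrow> \<phi> \<alpha>) (at \<alpha>)" by simp
  then have "((\<lambda>\<zeta>. \<phi> (\<alpha> + \<zeta>)) \<longlongrightarrow> \<phi> \<alpha>) (at 0)" by (rule LIM_offset_zero)
  then have "((\<lambda>\<zeta>. \<phi> (\<alpha> + \<zeta>) - \<phi> \<alpha>) \<longlongrightarrow> \<phi> \<alpha> - \<phi> \<alpha>) (at 0)"
    by (intro tendsto_intros)
  then show ?thesis by simp
qed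

theorem lemma5p1:
  fixes \<Omega> :: "(complex^'n) set"
    and v v' :: "'n \<Rightarrow> complex^'n" and m m' :: "'n \<Rightarrow> real"
    and C :: real and A :: "complex set" and a :: "complex^'n"
    and \<phi> :: "complex \<Rightarrow> complex^'n"
  assumes "open \<Omega>" and "connected \<Omega>" and "bounded \<Omega>"
    and "eli_data v m" and "eli_data v' m'"
    and "\<forall>z\<in>polydisc. eli v m z \<le> eli v' m' z + ereal C"
    and "eli_tau m' > 0"
    and "A \<subseteq> ball 0 1" and "a \<in> \<Omega>"
    and "\<forall>i. (\<lambda>z. \<phi> z $ i) holomorphic_on ball 0 1"
    and "\<phi> ` ball 0 1 \<subseteq> \<Omega>"
    and "(\<Sum>\<^sub>\<infinity>\<alpha>\<in>A. mult \<phi> a v' m' \<alpha>) \<le> ereal (eli_tau m')"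
  shows "(\<Sum>\<^sub>\<infinity>\<alpha>\<in>A. mult \<phi> a v m \<alpha>) \<le> ereal (eli_tau m)"
proof -
  note ed = assms(4) and ed' = assms(5) and hyp = assms(6) and hol = assms(10)
  have mpos: "\<And>l. m l > 0" using ed by (auto simp: eli_data_def)
  have tpos: "eli_tau m > 0" unfolding eli_tau_def using mpos by (auto intro: prod_pos)
  define R where "R = eli_tau m / eli_tau m'"
  have Rpos: "R > 0" using tpos assms(7) by (simp add: R_def)
  have tau: "R * eli_tau m' = eli_tau m" using assms(7) by (simp add: R_def)
  obtain c where c0: "c \<ge> 0" and lb: "\<forall>z. (\<forall>i. cmod (hdot z (v i)) \<le> 1) \<longrightarrow> (\<forall>j. hdot z (v' j) \<noteq> 0 \<longrightarrow>
     ereal (R * m' j * ln (cmod (hdot z (v' j)))) \<le> eli v m z + ereal c)"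
    using lower_bound[OF ed ed' hyp] unfolding R_def by blast
  have pw: "mult \<phi> a v m \<alpha> \<le> ereal R * mult \<phi> a v' m' \<alpha> \<and> 0 \<le> mult \<phi> a v m \<alpha> \<and> 0 \<le> mult \<phi> a v' m' \<alpha>"
    if \<alpha>: "\<alpha> \<in> A" for \<alpha>
  proof (cases "\<phi> \<alpha> = a")
    case False
    then show ?thesis by (simp add: mult_def)
  next
    case True
    have w: "((\<lambda>\<zeta>. \<phi> (\<alpha> + \<zeta>) - a) \<longlongrightarrow> 0) (at 0)"
      using phi_tendsto[OF hol] \<alpha> assms(8) True by blast
    have "0 \<le> mult \<phi> a v m \<alpha>"
      using True liminf_nonneg[OF ed w] tpos by (simp add: mult_def)
    moreover have "0 \<le> mult \<phi> a v' m' \<alpha>"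
      using True liminf_nonneg[OF ed' w] assms(7) by (simp add: mult_def)
    moreover have "mult \<phi> a v m \<alpha> \<le> ereal R * mult \<phi> a v' m' \<alpha>"
      using True compare[OF ed ed' w c0 lb Rpos tau] by (simp add: mult_def)
    ultimately show ?thesis by blast
  qed
  have s1: "(\<lambda>\<alpha>. mult \<phi> a v m \<alpha>) summable_on A"
    by (rule nonneg_summable_on_complete) (use pw in blast)
  have s2: "(\<lambda>\<alpha>. mult \<phi> a v' m' \<alpha>) summable_on A"
    by (rule nonneg_summable_on_complete) (use pw in blast)
  show ?thesis
  proof (rule infsum_le_finite_sums[OF s1])
    fix F assume F: "finite F" "F \<subseteq> A"
    have "sum (mult \<phi> a v m) F \<le> (\<Sum>\<alpha>\<in>F. ereal R * mult \<phi> a v' m' \<alpha>)"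
      by (rule sum_mono) (use pw F in blast)
    also have "\<dots> = ereal R * sum (mult \<phi> a v' m') F"
      by (rule sum_ereal_right_distrib[symmetric]) (use pw F in blast)
    also have "sum (mult \<phi> a v' m') F \<le> (\<Sum>\<^sub>\<infinity>\<alpha>\<in>A. mult \<phi> a v' m' \<alpha>)"
    proof -
      have "sum (mult \<phi> a v' m') F = (\<Sum>\<^sub>\<infinity>\<alpha>\<in>F. mult \<phi> a v' m' \<alpha>)"
        using F by simp
      also have "\<dots> \<le> (\<Sum>\<^sub>\<infinity>\<alpha>\<in>A. mult \<phi> a v' m' \<alpha>)"
        by (rule infsum_mono_neutral) (use F pw s2 in auto)
      finally show ?thesis .
    qed
    then have "ereal R * sum (mult \<phi> a v' m') F \<le> ereal R * (\<Sum>\<^sub>\<infinity>\<alpha>\<in>A. mult \<phi> a v' m' \<alpha>)"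
      using Rpos by (intro ereal_mult_left_mono) auto
    also have "\<dots> \<le> ereal R * ereal (eli_tau m')"
      using Rpos assms(12) by (intro ereal_mult_left_mono) auto
    also have "\<dots> = ereal (eli_tau m)" using tau by simp
    finally show "sum (mult \<phi> a v m) F \<le> ereal (eli_tau m)" .
  qed
qed


end
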